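(* Let $J$ be an order ideal in $\mathbb N^n$ and let $\mathbf a\le\mathbf b$ in $\mathbb N^n$. Then the geometric realization of the simplicial complex $\Delta^{\mathbf b}_{\mathbf a}(J)$ is homotopy equivalent to the geometric realization of the order complex of the poset $J\cap\big(\mathbf a+(\mathbb N^n\setminus[\mathbf 0,\mathbf b-\mathbf a])\big)$.
   Context: $\mathbb N^n$ is partially ordered componentwise; $[\mathbf x,\mathbf y]=\{\mathbf z:\mathbf x\le\mathbf z\le\mathbf y\}$; $\varepsilon_i$ is the $i$-th unit vector. An order ideal $J\subseteq\mathbb N^n$ is a subset with $\mathbf x\le\mathbf y\in J\Rightarrow\mathbf x\in J$. For $\mathbf a,\mathbf b\in\mathbb N^n$, $\Delta^{\mathbf b}_{\mathbf a}(J)$ is the simplicial complex on vertex set $\{1,\dots,n\}$ whose faces are the subsets $F$ such that $\sum_{i\notin F}a_i\varepsilon_i+\sum_{i\in F}(b_i+1)\varepsilon_i\in J$. The order complex $\Delta(P)$ of a poset $P$ has vertex set $P$ and the finite chains as faces. *)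

theory Defs
  imports "HOL-Analysis.Analysis" "HOL-Library.Function_Algebras"
begin

text \<open>Order ideals in N^n, where N^n is modelled as 'n => nat for a finite index type 'n,
  ordered componentwise (the standard pointwise order on functions).\<close>
definition order_ideal :: "('n \<Rightarrow> nat) set \<Rightarrow> bool" where
  "order_ideal J \<longleftrightarrow> (\<forall>x y. x \<le> y \<and> y \<in> J \<longrightarrow> x \<in> J)"

definition Delta_complex :: "('n \<Rightarrow> nat) \<Rightarrow> ('n \<Rightarrow> nat) \<Rightarrow> ('n \<Rightarrow> nat) set \<Rightarrow> 'n set set" where
  "Delta_complex a b J = {F. (\<lambda>i. if i \<in> F then b i + 1 else a i) \<in> J}"

definition order_complex :: "'a::order set \<Rightarrow> 'a set set" where
  "order_complex P = {C. finite C \<and> C \<subseteq> P \<and> (\<forall>x\<in>C. \<forall>y\<in>C. x \<le> y \<or> y \<le> x)}"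

text \<open>Geometric realization of an abstract simplicial complex K (a set of finite faces)
  as the set of finitely supported barycentric coordinate functions whose support is a face,
  with the coherent (weak) topology with respect to the closed simplices.\<close>
definition realization_carrier :: "'v set set \<Rightarrow> ('v \<Rightarrow> real) set" where
  "realization_carrier K = {f. (\<forall>v. 0 \<le> f v) \<and> finite {v. f v \<noteq> 0} \<and>
      {v. f v \<noteq> 0} \<in> K \<and> sum f {v. f v \<noteq> 0} = 1}"

definition closed_simplex :: "'v set set \<Rightarrow> 'v set \<Rightarrow> ('v \<Rightarrow> real) set" where
  "closed_simplex K F = {f \<in> realization_carrier K. {v. f v \<noteq> 0} \<subseteq> F}"

definition geometric_realization :: "'v set set \<Rightarrow> ('v \<Rightarrow> real) topology" where
  "geometric_realization K = topology (\<lambda>U. U \<subseteq> realization_carrier K \<and>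
      (\<forall>F\<in>K. openin (subtopology euclidean (closed_simplex K F)) (U \<inter> closed_simplex K F)))"

lemma openin_Union_Int_aux:
  fixes C :: "'a::topological_space set" and \<K> :: "'a set set"
  assumes "\<forall>U\<in>\<K>. openin (subtopology euclidean C) (U \<inter> C)"
  shows "openin (subtopology euclidean C) (\<Union>\<K> \<inter> C)"
proof -
  have "openin (subtopology euclidean C) (\<Union>((\<lambda>U. U \<inter> C) ` \<K>))"
    using assms by (intro openin_Union) auto
  moreover have "\<Union>((\<lambda>U. U \<inter> C) ` \<K>) = \<Union>\<K> \<inter> C" by blast
  ultimately show ?thesis by simp
qed

lemma openin_Int_Int_aux:
  fixes C :: "'a::topological_space set"
  assumes "openin (subtopology euclidean C) (S \<inter> C)" "openin (subtopology euclidean C) (T \<inter> C)"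
  shows "openin (subtopology euclidean C) (S \<inter> T \<inter> C)"
proof -
  have "openin (subtopology euclidean C) ((S \<inter> C) \<inter> (T \<inter> C))"
    using assms by (rule openin_Int)
  moreover have "(S \<inter> C) \<inter> (T \<inter> C) = S \<inter> T \<inter> C" by blast
  ultimately show ?thesis by simp
qed

lemma istopology_geometric_realization:
  fixes K :: "'v set set"
  shows "istopology (\<lambda>U. U \<subseteq> realization_carrier K \<and>
      (\<forall>F\<in>K. openin (subtopology euclidean (closed_simplex K F)) (U \<inter> closed_simplex K F)))"
  unfolding istopology_def
proof (intro conjI allI impI)
  fix S T :: "('v \<Rightarrow> real) set"
  assume S: "S \<subseteq> realization_carrier K \<and> (\<forall>F\<in>K. openin (subtopology euclidean (closed_simplex K F)) (S \<inter> closed_simplex K F))"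
    and T: "T \<subseteq> realization_carrier K \<and> (\<forall>F\<in>K. openin (subtopology euclidean (closed_simplex K F)) (T \<inter> closed_simplex K F))"
  show "S \<inter> T \<subseteq> realization_carrier K" using S by blast
  show "\<forall>F\<in>K. openin (subtopology euclidean (closed_simplex K F)) (S \<inter> T \<inter> closed_simplex K F)"
  proof
    fix F assume "F \<in> K"
    then show "openin (subtopology euclidean (closed_simplex K F)) (S \<inter> T \<inter> closed_simplex K F)"
      using S T by (intro openin_Int_Int_aux) simp_all
  qed
next
  fix \<K> :: "('v \<Rightarrow> real) set set"
  assume H: "\<forall>U\<in>\<K>. U \<subseteq> realization_carrier K \<and> (\<forall>F\<in>K. openin (subtopology euclidean (closed_simplex K F)) (U \<inter> closed_simplex K F))"
  show "\<Union>\<K> \<subseteq> realization_carrier K" using H by blast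
  show "\<forall>F\<in>K. openin (subtopology euclidean (closed_simplex K F)) (\<Union>\<K> \<inter> closed_simplex K F)"
  proof
    fix F assume F: "F \<in> K"
    show "openin (subtopology euclidean (closed_simplex K F)) (\<Union>\<K> \<inter> closed_simplex K F)"
      by (rule openin_Union_Int_aux) (use H F in blast)
  qed
qed

end

theory Submission
  imports Defs
begin


definition supp :: "('v \<Rightarrow> real) \<Rightarrow> 'v set" where "supp f = {v. f v \<noteq> 0}"

lemma openin_GR:
  "openin (geometric_realization K) U \<longleftrightarrow> U \<subseteq> realization_carrier K \<and>
      (\<forall>F\<in>K. openin (top_of_set (closed_simplex K F)) (U \<inter> closed_simplex K F))"
  unfolding geometric_realization_def
  by (subst topology_inverse'[OF istopology_geometric_realization]) simp

lemma simplex_sub_carrier: "closed_simplex K F \<subseteq> realization_carrier K"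
  by (auto simp: closed_simplex_def)

lemma topspace_GR: "topspace (geometric_realization K) = realization_carrier K"
proof -
  have "openin (geometric_realization K) (realization_carrier K)"
    unfolding openin_GR by (simp add: inf.absorb2 simplex_sub_carrier)
  then show ?thesis using openin_GR openin_subset
    by (metis openin_subset subset_antisym openin_topspace)
qed

lemma carrier_in_simplex:
  assumes "x \<in> realization_carrier K"
  shows "supp x \<in> K" "x \<in> closed_simplex K (supp x)"
  using assms by (auto simp: realization_carrier_def closed_simplex_def supp_def)

lemma open_tube_set:
  fixes OG :: "(real \<times> 'a::topological_space) set"
  assumes "open OG" "compact T"
  shows "open {y. \<forall>s\<in>T. (s,y) \<in> OG}"
proof -
  let ?W = "prod.swap -` OG"
  have oW: "open ?W" using assms(1) by (intro open_vimage continuous_on_swap)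
  show ?thesis
  proof (subst open_subopen, intro ballI)
    fix y0 assume "y0 \<in> {y. \<forall>s\<in>T. (s,y) \<in> OG}"
    then have "{y0} \<times> T \<subseteq> ?W" by auto
    from Elementary_Topology.tube_lemma[OF assms(2) oW this] obtain X0 where "y0 \<in> X0" "open X0" "X0 \<times> T \<subseteq> ?W" by blast
    moreover have "X0 \<subseteq> {y. \<forall>s\<in>T. (s,y) \<in> OG}"
    proof (intro subsetI CollectI ballI)
      fix y s assume "y \<in> X0" "s \<in> T"
      then have "(y,s) \<in> prod.swap -` OG" using \<open>X0 \<times> T \<subseteq> prod.swap -` OG\<close> by blast
      then show "(s,y) \<in> OG" by simp
    qed
    ultimately show "\<exists>T'. open T' \<and> y0 \<in> T' \<and> T' \<subseteq> {y. \<forall>s\<in>T. (s,y) \<in> OG}" by blast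
  qed
qed

lemma cont_prod_GR:
  fixes h :: "real \<times> ('v \<Rightarrow> real) \<Rightarrow> 'b"
  assumes into: "\<And>t x. t \<in> {0..1} \<Longrightarrow> x \<in> realization_carrier K \<Longrightarrow> h (t,x) \<in> topspace Z"
  and loc: "\<And>F U. F \<in> K \<Longrightarrow> openin Z U \<Longrightarrow>
     openin (top_of_set ({0..1} \<times> closed_simplex K F)) {p \<in> {0..1} \<times> closed_simplex K F. h p \<in> U}"
  shows "continuous_map (prod_topology (top_of_set {0..1}) (geometric_realization K)) Z h"
proof -
  have ts: "topspace (prod_topology (top_of_set {0..1::real}) (geometric_realization K)) = {0..1} \<times> realization_carrier K"
    by (simp add: topspace_GR)
  show ?thesis unfolding continuous_map_def ts
  proof (intro conjI allI impI)
    show "h \<in> {0..1} \<times> realization_carrier K \<rightarrow> topspace Z" using into by auto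
    fix U assume U: "openin Z U"
    let ?W = "{x \<in> {0..1} \<times> realization_carrier K. h x \<in> U}"
    show "openin (prod_topology (top_of_set {0..1}) (geometric_realization K)) ?W"
      unfolding openin_prod_topology_alt
    proof (intro allI impI)
      fix t x assume tx: "(t,x) \<in> ?W"
      hence t01: "t \<in> {0..1}" and xc: "x \<in> realization_carrier K" and hU: "h (t,x) \<in> U" by auto
      note F = carrier_in_simplex[OF xc]
      from loc[OF F(1) U] obtain Oo where Oo: "open Oo" and
        eqO: "{p \<in> {0..1} \<times> closed_simplex K (supp x). h p \<in> U} = ({0..1} \<times> closed_simplex K (supp x)) \<inter> Oo"
        unfolding openin_open by blast
      have "(t,x) \<in> {p \<in> {0..1} \<times> closed_simplex K (supp x). h p \<in> U}" using t01 F(2) hU by simp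
      then have "(t,x) \<in> Oo" unfolding eqO by blast
      then obtain A B where AB0: "open A" "open B" "(t,x) \<in> A \<times> B" "A \<times> B \<subseteq> Oo" by (rule open_prod_elim[OF Oo])
      then have AB: "open A" "open B" "t \<in> A" "x \<in> B" "A \<times> B \<subseteq> Oo" by auto
      obtain d where d: "d > 0" "cball t d \<subseteq> A" using AB open_contains_cball by blast
      define T where "T = cball t d \<inter> {0..1}"
      have cT: "compact T" unfolding T_def by (simp add: compact_Int_closed)
      define V where "V = {y \<in> realization_carrier K. \<forall>s\<in>T. (s,y) \<in> ?W}"
      have xV: "x \<in> V"
      proof -
        have "(s,x) \<in> ?W" if "s \<in> T" for s
        proof -
          have "(s,x) \<in> Oo" using that d AB unfolding T_def by blast
          moreover have "s \<in> {0..1}" using that T_def by auto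
          ultimately have "(s,x) \<in> ({0..1} \<times> closed_simplex K (supp x)) \<inter> Oo"
            using F by blast
          then have "(s,x) \<in> {p \<in> {0..1} \<times> closed_simplex K (supp x). h p \<in> U}"
            unfolding eqO .
          then show ?thesis using xc by auto
        qed
        then show ?thesis using xc V_def by auto
      qed
      have oV: "openin (geometric_realization K) V"
        unfolding openin_GR
      proof (intro conjI ballI)
        show "V \<subseteq> realization_carrier K" by (auto simp: V_def)
        fix G assume G: "G \<in> K"
        from loc[OF G U] obtain OG where OG: "open OG" and
          eqG: "{p \<in> {0..1} \<times> closed_simplex K G. h p \<in> U} = ({0..1} \<times> closed_simplex K G) \<inter> OG"
          unfolding openin_open by blast
        define \<Omega> where "\<Omega> = {y. \<forall>s\<in>T. (s,y) \<in> OG}"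
        have oO: "open \<Omega>" unfolding \<Omega>_def using OG cT by (rule open_tube_set)
        have "V \<inter> closed_simplex K G = closed_simplex K G \<inter> \<Omega>"
        proof (intro set_eqI iffI)
          fix y assume y: "y \<in> V \<inter> closed_simplex K G"
          have "(s,y) \<in> OG" if "s \<in> T" for s
          proof -
            have "(s,y) \<in> {p \<in> {0..1} \<times> closed_simplex K G. h p \<in> U}"
              using y that T_def V_def by auto
            then show ?thesis unfolding eqG by blast
          qed
          then show "y \<in> closed_simplex K G \<inter> \<Omega>" using y \<Omega>_def by auto
        next
          fix y assume y: "y \<in> closed_simplex K G \<inter> \<Omega>"
          have yc: "y \<in> realization_carrier K" using y simplex_sub_carrier by blast
          have "(s,y) \<in> ?W" if "s \<in> T" for s
          proof -
            have "(s,y) \<in> ({0..1} \<times> closed_simplex K G) \<inter> OG"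
              using y that T_def \<Omega>_def by auto
            then have "(s,y) \<in> {p \<in> {0..1} \<times> closed_simplex K G. h p \<in> U}" unfolding eqG .
            then show ?thesis using yc by auto
          qed
          then show "y \<in> V \<inter> closed_simplex K G" using y yc V_def by auto
        qed
        then show "openin (top_of_set (closed_simplex K G)) (V \<inter> closed_simplex K G)"
          using oO by (simp add: openin_open_Int)
      qed
      show "\<exists>U V. openin (top_of_set {0..1}) U \<and> openin (geometric_realization K) V \<and> t \<in> U \<and> x \<in> V \<and> U \<times> V \<subseteq> ?W"
      proof (intro exI conjI)
        show "openin (top_of_set {0..1}) ({0..1} \<inter> ball t d)" by (simp add: openin_open_Int)
        show "t \<in> {0..1} \<inter> ball t d" using t01 d by auto
        show "openin (geometric_realization K) V" by (rule oV)
        show "x \<in> V" by (rule xV)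
        show "({0..1} \<inter> ball t d) \<times> V \<subseteq> ?W"
        proof
          fix p assume "p \<in> ({0..1} \<inter> ball t d) \<times> V"
          then obtain s y where p: "p = (s,y)" "s \<in> {0..1}" "s \<in> ball t d" "y \<in> V" by auto
          then have "s \<in> T" unfolding T_def by auto
          then show "p \<in> ?W" using p V_def by auto
        qed
      qed
    qed
  qed
qed




definition dclosed :: "'v set set \<Rightarrow> bool" where
  "dclosed L \<longleftrightarrow> (\<forall>F\<in>L. finite F \<and> (\<forall>G. G \<subseteq> F \<longrightarrow> G \<noteq> {} \<longrightarrow> G \<in> L))"

lemma carrier_iff:
  assumes fin: "finite R" and sub: "\<And>G. G \<subseteq> R \<Longrightarrow> G \<noteq> {} \<Longrightarrow> G \<in> L"
  shows "(f \<in> realization_carrier L \<and> supp f \<subseteq> R) \<longleftrightarrow>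
         ((\<forall>v. 0 \<le> f v) \<and> (\<forall>v. v \<notin> R \<longrightarrow> f v = 0) \<and> sum f R = 1)"
proof
  assume a: "f \<in> realization_carrier L \<and> supp f \<subseteq> R"
  then have s: "supp f \<subseteq> R" by blast
  have "sum f (supp f) = sum f R"
    by (rule sum.mono_neutral_left[OF fin s]) (auto simp: supp_def)
  with a s show "(\<forall>v. 0 \<le> f v) \<and> (\<forall>v. v \<notin> R \<longrightarrow> f v = 0) \<and> sum f R = 1"
    by (auto simp: realization_carrier_def supp_def)
next
  assume a: "(\<forall>v. 0 \<le> f v) \<and> (\<forall>v. v \<notin> R \<longrightarrow> f v = 0) \<and> sum f R = 1"
  have s: "supp f \<subseteq> R" using a by (auto simp: supp_def)
  have eq: "sum f (supp f) = sum f R"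
    by (rule sum.mono_neutral_left[OF fin s]) (auto simp: supp_def)
  have "supp f \<noteq> {}" using a eq by auto
  then have "supp f \<in> L" using sub s by blast
  moreover have "finite (supp f)" using s fin finite_subset by blast
  ultimately show "f \<in> realization_carrier L \<and> supp f \<subseteq> R"
    using a s eq by (auto simp: realization_carrier_def supp_def)
qed

lemma closed_simplex_eq: "closed_simplex L C = {f \<in> realization_carrier L. supp f \<subseteq> C}"
  by (simp add: closed_simplex_def supp_def)

lemma closed_simplex_closed:
  assumes d: "dclosed L" and C: "C \<in> L"
  shows "closed (closed_simplex L C)"
proof -
  have fin: "finite C" using d C by (auto simp: dclosed_def)
  have sub: "\<And>G. G \<subseteq> C \<Longrightarrow> G \<noteq> {} \<Longrightarrow> G \<in> L" using d C by (auto simp: dclosed_def)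
  have eq: "closed_simplex L C = {f. (\<forall>v. 0 \<le> f v) \<and> (\<forall>v. v \<notin> C \<longrightarrow> f v = 0) \<and> sum f C = 1}"
    unfolding closed_simplex_eq using carrier_iff[OF fin sub] by blast
  have c1: "closed {f::'a\<Rightarrow>real. \<forall>v. 0 \<le> f v}"
    by (intro closed_Collect_all closed_Collect_le continuous_on_const continuous_on_product_coordinates)
  have c2: "closed {f::'a\<Rightarrow>real. \<forall>v. v \<notin> C \<longrightarrow> f v = 0}"
  proof (intro closed_Collect_all)
    fix v
    show "closed {f::'a\<Rightarrow>real. v \<notin> C \<longrightarrow> f v = 0}"
    proof (cases "v \<in> C")
      case True then show ?thesis by simp
    next
      case False then show ?thesis
        by (simp, intro closed_Collect_eq continuous_on_const continuous_on_product_coordinates)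
    qed
  qed
  have c3: "closed {f::'a\<Rightarrow>real. sum f C = 1}"
    by (intro closed_Collect_eq continuous_on_const continuous_on_sum continuous_on_product_coordinates)
  have "{f. (\<forall>v. 0 \<le> f v) \<and> (\<forall>v. v \<notin> C \<longrightarrow> f v = 0) \<and> sum f C = 1} =
        {f::'a\<Rightarrow>real. \<forall>v. 0 \<le> f v} \<inter> {f. \<forall>v. v \<notin> C \<longrightarrow> f v = 0} \<inter> {f. sum f C = 1}" by auto
  moreover have "closed ({f::'a\<Rightarrow>real. \<forall>v. 0 \<le> f v} \<inter> {f. \<forall>v. v \<notin> C \<longrightarrow> f v = 0} \<inter> {f. sum f C = 1})"
    by (intro closed_Int c1 c2 c3)
  ultimately show ?thesis unfolding eq by simp
qed

lemma pre_open_GR: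
  fixes h :: "'x::topological_space \<Rightarrow> ('v \<Rightarrow> real)"
  assumes dL: "dclosed L" and fin: "finite H" and cont: "continuous_on S h"
    and img: "\<And>x. x \<in> S \<Longrightarrow> h x \<in> realization_carrier L \<and> supp (h x) \<subseteq> H"
    and U: "openin (geometric_realization L) U"
  shows "openin (top_of_set S) {p\<in>S. h p \<in> U}"
proof -
  define A where "A = {y \<in> realization_carrier L. supp y \<subseteq> H}"
  define Cs where "Cs = {C \<in> L. C \<subseteq> H}"
  have fCs: "finite Cs" unfolding Cs_def using fin by (rule rev_finite_subset[OF finite_Pow_iff[THEN iffD2]]) auto
  have Aeq: "A - U = (\<Union>C\<in>Cs. closed_simplex L C - U)"
  proof (intro set_eqI iffI)
    fix y assume "y \<in> A - U"
    then have y: "y \<in> realization_carrier L" "supp y \<subseteq> H" "y \<notin> U" by (auto simp: A_def)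
    then show "y \<in> (\<Union>C\<in>Cs. closed_simplex L C - U)"
      using carrier_in_simplex[OF y(1)] unfolding Cs_def by blast
  next
    fix y assume "y \<in> (\<Union>C\<in>Cs. closed_simplex L C - U)"
    then show "y \<in> A - U" unfolding A_def Cs_def closed_simplex_eq by auto
  qed
  have "closed (closed_simplex L C - U)" if C: "C \<in> Cs" for C
  proof -
    have CL: "C \<in> L" using C Cs_def by auto
    have o: "openin (top_of_set (closed_simplex L C)) (U \<inter> closed_simplex L C)"
      using U CL unfolding openin_GR by blast
    have "closedin (top_of_set (closed_simplex L C)) (closed_simplex L C - (U \<inter> closed_simplex L C))"
      using o by (simp add: closedin_def openin_subset inf.absorb2 Diff_Diff_Int Int_commute)
    moreover have "closed_simplex L C - (U \<inter> closed_simplex L C) = closed_simplex L C - U" by blast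
    ultimately show ?thesis using closedin_closed_trans closed_simplex_closed[OF dL CL] by metis
  qed
  then have cl: "closed (A - U)" unfolding Aeq using fCs by (intro closed_UN) auto
  have "closedin (top_of_set S) (S \<inter> h -` (A - U))"
    by (rule continuous_closedin_preimage[OF cont cl])
  then have "openin (top_of_set S) (S - (S \<inter> h -` (A - U)))"
    by (intro openin_diff) auto
  moreover have "S - (S \<inter> h -` (A - U)) = {p\<in>S. h p \<in> U}"
    using img unfolding A_def by auto
  ultimately show ?thesis by simp
qed

lemma GR_cont_prod:
  fixes h :: "real \<times> ('v \<Rightarrow> real) \<Rightarrow> ('w \<Rightarrow> real)"
  assumes dL: "dclosed L"
  and loc: "\<And>F. F \<in> K \<Longrightarrow> \<exists>H. finite H \<and> continuous_on ({0..1} \<times> closed_simplex K F) h \<and>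
       (\<forall>p \<in> {0..1} \<times> closed_simplex K F. h p \<in> realization_carrier L \<and> supp (h p) \<subseteq> H)"
  shows "continuous_map (prod_topology (top_of_set {0..1}) (geometric_realization K)) (geometric_realization L) h"
proof (rule cont_prod_GR)
  fix t x assume t: "t \<in> {0..1::real}" and x: "x \<in> realization_carrier K"
  note F = carrier_in_simplex[OF x]
  show "h (t,x) \<in> topspace (geometric_realization L)"
    using loc[OF F(1)] t F(2) by (auto simp: topspace_GR)
next
  fix F U assume F: "F \<in> K" and U: "openin (geometric_realization L) U"
  obtain H where H: "finite H" "continuous_on ({0..1} \<times> closed_simplex K F) h"
     "\<And>p. p \<in> {0..1} \<times> closed_simplex K F \<Longrightarrow> h p \<in> realization_carrier L \<and> supp (h p) \<subseteq> H"
    using loc[OF F] by blast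
  show "openin (top_of_set ({0..1} \<times> closed_simplex K F)) {p \<in> {0..1} \<times> closed_simplex K F. h p \<in> U}"
    by (rule pre_open_GR[OF dL H(1) H(2) H(3) U])
qed

lemma GR_hom:
  fixes h :: "real \<times> ('v \<Rightarrow> real) \<Rightarrow> ('w \<Rightarrow> real)"
  assumes dL: "dclosed L"
  and loc: "\<And>F. F \<in> K \<Longrightarrow> \<exists>H. finite H \<and> continuous_on ({0..1} \<times> closed_simplex K F) h \<and>
       (\<forall>p \<in> {0..1} \<times> closed_simplex K F. h p \<in> realization_carrier L \<and> supp (h p) \<subseteq> H)"
  and f: "\<And>x. x \<in> realization_carrier K \<Longrightarrow> h (0,x) = f x"
  and g: "\<And>x. x \<in> realization_carrier K \<Longrightarrow> h (1,x) = g x"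
  shows "homotopic_with (\<lambda>_. True) (geometric_realization K) (geometric_realization L) f g"
  using GR_cont_prod[OF dL loc] f g
  by (subst homotopic_with) (auto simp: topspace_GR intro!: exI[of _ h])

lemma GR_cont:
  fixes f :: "('v \<Rightarrow> real) \<Rightarrow> ('w \<Rightarrow> real)"
  assumes dL: "dclosed L"
  and loc: "\<And>F. F \<in> K \<Longrightarrow> \<exists>H. finite H \<and> continuous_on (closed_simplex K F) f \<and>
       (\<forall>x \<in> closed_simplex K F. f x \<in> realization_carrier L \<and> supp (f x) \<subseteq> H)"
  shows "continuous_map (geometric_realization K) (geometric_realization L) f"
proof -
  have "homotopic_with (\<lambda>_. True) (geometric_realization K) (geometric_realization L) f f"
  proof (rule GR_hom[OF dL, of _ "f \<circ> snd"])
    fix F assume F: "F \<in> K"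
    obtain H where H: "finite H" "continuous_on (closed_simplex K F) f"
      "\<forall>x \<in> closed_simplex K F. f x \<in> realization_carrier L \<and> supp (f x) \<subseteq> H" using loc[OF F] by blast
    have "continuous_on ({0..1::real} \<times> closed_simplex K F) (f \<circ> snd)"
      by (intro continuous_on_compose continuous_on_snd continuous_on_subset[OF H(2)]) auto
    then show "\<exists>H. finite H \<and> continuous_on ({0..1::real} \<times> closed_simplex K F) (f \<circ> snd) \<and>
       (\<forall>p \<in> {0..1} \<times> closed_simplex K F. (f \<circ> snd) p \<in> realization_carrier L \<and> supp ((f \<circ> snd) p) \<subseteq> H)"
      using H by (intro exI[of _ H]) auto
  qed auto
  then show ?thesis using homotopic_with_imp_continuous_maps by blast
qed




definition vv :: "('n \<Rightarrow> nat) \<Rightarrow> ('n \<Rightarrow> nat) \<Rightarrow> 'n set \<Rightarrow> ('n \<Rightarrow> nat)" where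
  "vv a b G = (\<lambda>i. if i \<in> G then b i + 1 else a i)"
definition SS :: "('n \<Rightarrow> nat) \<Rightarrow> ('n \<Rightarrow> nat) \<Rightarrow> 'n set" where
  "SS b p = {i. b i < p i}"
definition rr :: "('n \<Rightarrow> nat) \<Rightarrow> ('n \<Rightarrow> nat) \<Rightarrow> ('n \<Rightarrow> nat) \<Rightarrow> ('n \<Rightarrow> nat)" where
  "rr a b p = vv a b (SS b p)"
definition PP :: "('n \<Rightarrow> nat) \<Rightarrow> ('n \<Rightarrow> nat) \<Rightarrow> ('n \<Rightarrow> nat) set \<Rightarrow> ('n \<Rightarrow> nat) set" where
  "PP a b J = J \<inter> (\<lambda>c. a + c) ` (UNIV - {0..b - a})"

lemma PP_iff:
  assumes ab: "a \<le> b"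
  shows "p \<in> PP a b J \<longleftrightarrow> p \<in> J \<and> a \<le> p \<and> \<not> p \<le> b"
proof
  assume "p \<in> PP a b J"
  then obtain c where p: "p \<in> J" "p = a + c" "\<not> c \<le> b - a" by (auto simp: PP_def)
  have "a \<le> p" using p by (simp add: le_fun_def)
  moreover have "\<not> p \<le> b"
  proof
    assume "p \<le> b"
    then have "c \<le> b - a" using p(2) by (auto simp: le_fun_def) (metis add.commute add_le_imp_le_diff)
    then show False using p(3) by simp
  qed
  ultimately show "p \<in> J \<and> a \<le> p \<and> \<not> p \<le> b" using p by simp
next
  assume h: "p \<in> J \<and> a \<le> p \<and> \<not> p \<le> b"
  have "p = a + (p - a)" using h by (auto simp: le_fun_def fun_eq_iff)
  moreover have "\<not> (p - a) \<le> b - a"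
  proof
    assume "p - a \<le> b - a"
    then have "\<forall>x. p x - a x \<le> b x - a x" by (simp add: le_fun_def)
    then have "p \<le> b" using h ab unfolding le_fun_def
      by (metis add_diff_inverse_nat add_le_mono1 add.commute not_le le_trans order_refl)
    then show False using h by simp
  qed
  ultimately show "p \<in> PP a b J" using h unfolding PP_def by (auto intro!: image_eqI[of p _ "p - a"])
qed




lemma carrier_intro:
  assumes "\<And>v. 0 \<le> f v" "finite R" "supp f \<subseteq> R" "sum f R = 1" "supp f \<in> L"
  shows "f \<in> realization_carrier L"
proof -
  have "sum f (supp f) = sum f R"
    by (rule sum.mono_neutral_left[OF assms(2,3)]) (auto simp: supp_def)
  then show ?thesis using assms finite_subset[OF assms(3,2)]
    by (auto simp: realization_carrier_def supp_def)
qed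

lemma carrier_D:
  assumes "f \<in> realization_carrier L"
  shows "\<And>v. 0 \<le> f v" "finite (supp f)" "supp f \<in> L" "sum f (supp f) = 1"
  using assms by (auto simp: realization_carrier_def supp_def)

lemma carrier_sum:
  assumes "f \<in> realization_carrier L" "finite R" "supp f \<subseteq> R"
  shows "sum f R = 1"
proof -
  have "sum f (supp f) = sum f R"
    by (rule sum.mono_neutral_left[OF assms(2,3)]) (auto simp: supp_def)
  then show ?thesis using carrier_D(4)[OF assms(1)] by simp
qed

lemma carrier_supp_ne:
  assumes "f \<in> realization_carrier L" shows "supp f \<noteq> {}"
  using carrier_D(4)[OF assms] by auto

lemma comb_carrier:
  assumes fin: "finite R" and sub: "\<And>G. G \<subseteq> R \<Longrightarrow> G \<noteq> {} \<Longrightarrow> G \<in> L"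
    and u: "u \<in> realization_carrier L" "supp u \<subseteq> R"
    and w: "w \<in> realization_carrier L" "supp w \<subseteq> R"
    and t: "t \<in> {0..1::real}"
  shows "(\<lambda>v. (1-t) * u v + t * w v) \<in> realization_carrier L \<and> supp (\<lambda>v. (1-t) * u v + t * w v) \<subseteq> R"
proof -
  have U: "(\<forall>v. 0 \<le> u v) \<and> (\<forall>v. v \<notin> R \<longrightarrow> u v = 0) \<and> sum u R = 1"
    using carrier_iff[OF fin sub] u by blast
  have W: "(\<forall>v. 0 \<le> w v) \<and> (\<forall>v. v \<notin> R \<longrightarrow> w v = 0) \<and> sum w R = 1"
    using carrier_iff[OF fin sub] w by blast
  have "sum (\<lambda>v. (1-t) * u v + t * w v) R = (1-t) * sum u R + t * sum w R"
    by (simp add: sum.distrib sum_distrib_left)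
  then have "sum (\<lambda>v. (1-t) * u v + t * w v) R = 1" using U W by simp
  moreover have "\<forall>v. 0 \<le> (1-t) * u v + t * w v" using U W t by auto
  moreover have "\<forall>v. v \<notin> R \<longrightarrow> (1-t) * u v + t * w v = 0" using U W by auto
  ultimately show ?thesis using carrier_iff[OF fin sub] by blast
qed

lemma dclosed_oc: "dclosed (order_complex P)"
  unfolding dclosed_def order_complex_def by (auto intro: finite_subset)

lemma chain_max:
  fixes C :: "'a::order set"
  assumes "finite C" "C \<noteq> {}" "\<forall>x\<in>C. \<forall>y\<in>C. x \<le> y \<or> y \<le> x"
  obtains m where "m \<in> C" "\<And>c. c \<in> C \<Longrightarrow> c \<le> m"
  using finite_has_maximal[OF assms(1,2)] assms(3) by (metis order.trans)

lemma chain_min: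
  fixes C :: "'a::order set"
  assumes "finite C" "C \<noteq> {}" "\<forall>x\<in>C. \<forall>y\<in>C. x \<le> y \<or> y \<le> x"
  obtains m where "m \<in> C" "\<And>c. c \<in> C \<Longrightarrow> m \<le> c"
  using finite_has_minimal[OF assms(1,2)] assms(3) by (metis order.trans)

lemma cont_coord [continuous_intros]: "continuous_on S (\<lambda>x::'a\<Rightarrow>'b::topological_space. x i)"
  by (rule continuous_on_subset[OF continuous_on_product_coordinates]) simp

lemma cont_coord2: "continuous_on S g \<Longrightarrow> continuous_on S (\<lambda>x. g x i)"
  by (rule continuous_on_product_then_coordinatewise)

lemma cont_Min:
  fixes G :: "'n set"
  assumes "finite G" "G \<noteq> {}"
  shows "continuous_on S (\<lambda>x::'n\<Rightarrow>real. Min (x ` G))"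
  using assms
proof (induction G rule: finite_ne_induct)
  case (singleton i)
  then show ?case by (simp add: cont_coord)
next
  case (insert i G)
  have eq: "(\<lambda>x::'n\<Rightarrow>real. Min (x ` insert i G)) = (\<lambda>x. min (x i) (Min (x ` G)))"
    using insert by (auto simp: Min_insert)
  show ?case unfolding eq
    by (intro continuous_on_min insert.IH cont_coord)
qed

lemma cont_Max0:
  fixes G :: "'n set"
  assumes "finite G"
  shows "continuous_on S (\<lambda>x::'n\<Rightarrow>real. Max (insert 0 (x ` G)))"
  using assms
proof (induction G rule: finite_induct)
  case empty
  then show ?case by simp
next
  case (insert i G)
  have eq: "(\<lambda>x::'n\<Rightarrow>real. Max (insert 0 (x ` insert i G))) = (\<lambda>x. max (x i) (Max (insert 0 (x ` G))))"
    using insert by (auto simp: insert_commute[of 0])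
  show ?case unfolding eq
    by (intro continuous_on_max insert.IH cont_coord)
qed




locale nset =
  fixes a b :: "'n::finite \<Rightarrow> nat" and J :: "('n \<Rightarrow> nat) set"
  assumes ab: "a \<le> b" and J: "order_ideal J"
begin

lemma SS_vv: "SS b (vv a b G) = G"
  using ab by (auto simp: SS_def vv_def le_fun_def not_less) (metis leD)

lemma vv_mono: "G \<subseteq> G' \<Longrightarrow> vv a b G \<le> vv a b G'"
  using ab by (auto simp: vv_def le_fun_def) (metis le_SucI order_refl)

lemma vv_inj: "inj_on (vv a b) A"
  by (metis SS_vv inj_onI)

lemma J_down: "x \<le> y \<Longrightarrow> y \<in> J \<Longrightarrow> x \<in> J"
  using J unfolding order_ideal_def by blast

lemma K1_iff: "F \<in> Delta_complex a b J \<longleftrightarrow> vv a b F \<in> J"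
  by (simp add: Delta_complex_def vv_def)

lemma dclosed_K1: "dclosed (Delta_complex a b J)"
  unfolding dclosed_def
proof (intro ballI conjI allI impI)
  fix F G assume "F \<in> Delta_complex a b J" "G \<subseteq> F" "G \<noteq> {}"
  then show "G \<in> Delta_complex a b J" using vv_mono J_down K1_iff by blast
qed simp

lemma vv_PP: "G \<noteq> {} \<Longrightarrow> vv a b G \<in> J \<Longrightarrow> vv a b G \<in> PP a b J"
  unfolding PP_iff[OF ab]
  using ab by (auto simp: vv_def le_fun_def) (metis le_SucI)

lemma PP_SS_ne: "p \<in> PP a b J \<Longrightarrow> SS b p \<noteq> {}"
  unfolding PP_iff[OF ab] by (auto simp: SS_def le_fun_def not_le)

lemma rr_le: "p \<in> PP a b J \<Longrightarrow> rr a b p \<le> p"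
  unfolding PP_iff[OF ab] by (auto simp: rr_def vv_def SS_def le_fun_def)

lemma rr_PP: "p \<in> PP a b J \<Longrightarrow> rr a b p \<in> PP a b J"
proof -
  assume p: "p \<in> PP a b J"
  have "rr a b p \<in> J" using rr_le[OF p] p J_down unfolding PP_iff[OF ab] by blast
  then show ?thesis using vv_PP PP_SS_ne[OF p] unfolding rr_def by blast
qed

lemma SS_mono: "p \<le> q \<Longrightarrow> SS b p \<subseteq> SS b q"
  by (auto simp: SS_def le_fun_def intro: less_le_trans)

lemma rr_mono: "p \<le> q \<Longrightarrow> rr a b p \<le> rr a b q"
  unfolding rr_def by (intro vv_mono SS_mono)

lemma SS_K1: "p \<in> PP a b J \<Longrightarrow> SS b p \<in> Delta_complex a b J"
proof -
  assume p: "p \<in> PP a b J"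
  have "p \<in> J" using p PP_iff[OF ab] by blast
  then have "rr a b p \<in> J" using J_down rr_le[OF p] by blast
  then show ?thesis by (simp add: K1_iff rr_def)
qed

end



definition gap :: "('n \<Rightarrow> real) \<Rightarrow> 'n set \<Rightarrow> real" where
  "gap f G = Min (f ` G) - Max (insert 0 (f ` (- G)))"

lemma gap_pos:
  fixes f :: "'n::finite \<Rightarrow> real"
  assumes "G \<noteq> {}" "gap f G > 0"
  shows "i \<in> G \<Longrightarrow> 0 < f i" and "i \<in> G \<Longrightarrow> j \<notin> G \<Longrightarrow> f j < f i"
proof -
  have m: "Min (f`G) \<le> f i" if "i \<in> G" for i using that by simp
  have M: "f j \<le> Max (insert 0 (f ` (-G)))" if "j \<notin> G" for j using that by simp
  have M0: "0 \<le> Max (insert 0 (f ` (-G)))" by simp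
  have g: "Max (insert 0 (f ` (-G))) < Min (f`G)" using assms(2) by (simp add: gap_def)
  show "0 < f i" if "i \<in> G" using m[OF that] M0 g by linarith
  show "f j < f i" if "i \<in> G" "j \<notin> G" using m[OF that(1)] M[OF that(2)] g by linarith
qed

lemma gap_cont:
  fixes G :: "'n::finite set"
  assumes "G \<noteq> {}"
  shows "continuous_on S (\<lambda>f. gap f G)"
  unfolding gap_def by (intro continuous_on_diff cont_Min cont_Max0 assms) auto

context nset begin

abbreviation "K1 \<equiv> Delta_complex a b J"
abbreviation "K2 \<equiv> order_complex (PP a b J)"

definition phi0 :: "('n \<Rightarrow> real) \<Rightarrow> ('n \<Rightarrow> nat) \<Rightarrow> real" where
  "phi0 f p = (if SS b p \<noteq> {} \<and> p = vv a b (SS b p) then max 0 (gap f (SS b p)) else 0)"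

definition D1 :: "('n \<Rightarrow> real) \<Rightarrow> real" where
  "D1 f = (\<Sum>G\<in>{G::'n set. G \<noteq> {}}. max 0 (gap f G))"

definition phi :: "('n \<Rightarrow> real) \<Rightarrow> ('n \<Rightarrow> nat) \<Rightarrow> real" where
  "phi f = (\<lambda>p. phi0 f p / D1 f)"

lemma D1_pos:
  assumes f: "f \<in> realization_carrier K1"
  shows "0 < D1 f"
proof -
  obtain i0 where i0: "i0 \<in> supp f" using carrier_supp_ne[OF f] by blast
  have fi0: "0 < f i0" using i0 carrier_D(1)[OF f, of i0] by (auto simp: supp_def)
  define M where "M = Max (range f)"
  define Gs where "Gs = {i. f i = M}"
  have "M \<in> range f" unfolding M_def by (intro Max_in) auto
  then have Gne: "Gs \<noteq> {}" unfolding Gs_def by auto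
  have "f i0 \<le> M" unfolding M_def by (rule Max_ge) auto
  then have Mpos: "0 < M" using fi0 by linarith
  have "f ` Gs = {M}" using Gne unfolding Gs_def by auto
  then have mn: "Min (f ` Gs) = M" by simp
  have "Max (insert 0 (f ` (- Gs))) < M"
  proof (subst Max_less_iff, simp, simp, intro ballI)
    fix x assume "x \<in> insert 0 (f ` (- Gs))"
    then show "x < M"
    proof
      assume "x = 0" then show ?thesis using Mpos by simp
    next
      assume "x \<in> f ` (- Gs)"
      then obtain j where "x = f j" "f j \<noteq> M" unfolding Gs_def by auto
      moreover have "f j \<le> M" unfolding M_def by simp
      ultimately show ?thesis by simp
    qed
  qed
  then have gp: "0 < gap f Gs" using mn by (simp add: gap_def)
  have "max 0 (gap f Gs) \<le> D1 f" unfolding D1_def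
    by (rule member_le_sum) (use Gne in auto)
  then show ?thesis using gp by simp
qed

lemma phi_vv: "G \<noteq> {} \<Longrightarrow> phi f (vv a b G) = max 0 (gap f G) / D1 f"
  by (simp add: phi_def phi0_def SS_vv)

lemma phi_nz:
  assumes "phi f p \<noteq> 0"
  shows "SS b p \<noteq> {} \<and> p = vv a b (SS b p) \<and> gap f (SS b p) > 0"
  using assms by (auto simp: phi_def phi0_def split: if_splits)

lemma phi_nonneg: "f \<in> realization_carrier K1 \<Longrightarrow> 0 \<le> phi f p"
proof -
  assume f: "f \<in> realization_carrier K1"
  have "0 < D1 f" using D1_pos[OF f] .
  then show ?thesis by (simp add: phi_def phi0_def)
qed

lemma phi_carrier:
  assumes f: "f \<in> realization_carrier K1"
  shows "phi f \<in> realization_carrier K2 \<and> supp (phi f) \<subseteq> vv a b ` {G. G \<noteq> {}}"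
proof -
  define R where "R = vv a b ` {G. G \<noteq> {}}"
  have finR: "finite R" unfolding R_def by simp
  have suppR: "supp (phi f) \<subseteq> R"
    unfolding R_def supp_def using phi_nz by blast
  have "sum (phi f) R = (\<Sum>G\<in>{G. G \<noteq> {}}. phi f (vv a b G))"
    unfolding R_def by (rule sum.reindex_cong[OF vv_inj]) auto
  also have "\<dots> = (\<Sum>G\<in>{G. G \<noteq> {}}. max 0 (gap f G) / D1 f)"
    by (rule sum.cong) (auto simp: phi_vv)
  also have "\<dots> = 1" using D1_pos[OF f] by (simp add: sum_divide_distrib[symmetric] D1_def)
  finally have s1: "sum (phi f) R = 1" .
  have sub: "SS b p \<subseteq> supp f" if "p \<in> supp (phi f)" for p
  proof
    fix i assume i: "i \<in> SS b p"
    have "phi f p \<noteq> 0" using that by (simp add: supp_def)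
    note nz = phi_nz[OF this]
    have "0 < f i" using gap_pos(1)[OF _ _ i] nz by blast
    then show "i \<in> supp f" by (simp add: supp_def)
  qed
  have inPP: "p \<in> PP a b J" if "p \<in> supp (phi f)" for p
  proof -
    have "phi f p \<noteq> 0" using that by (simp add: supp_def)
    note nz = phi_nz[OF this]
    have "vv a b (supp f) \<in> J" using carrier_D(3)[OF f] K1_iff by blast
    then have "vv a b (SS b p) \<in> J" using vv_mono[OF sub[OF that]] J_down by blast
    then have "vv a b (SS b p) \<in> PP a b J" using vv_PP nz by blast
    then show ?thesis using nz by simp
  qed
  have chain: "p \<le> q \<or> q \<le> p" if "p \<in> supp (phi f)" "q \<in> supp (phi f)" for p q
  proof -
    have np: "phi f p \<noteq> 0" and nq: "phi f q \<noteq> 0" using that by (auto simp: supp_def)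
    note P = phi_nz[OF np] and Q = phi_nz[OF nq]
    have "SS b p \<subseteq> SS b q \<or> SS b q \<subseteq> SS b p"
    proof (rule ccontr)
      assume "\<not> ?thesis"
      then obtain i j where ij: "i \<in> SS b p" "i \<notin> SS b q" "j \<in> SS b q" "j \<notin> SS b p" by blast
      have "f j < f i" using gap_pos(2)[of "SS b p" f i j] P ij by blast
      moreover have "f i < f j" using gap_pos(2)[of "SS b q" f j i] Q ij by blast
      ultimately show False by simp
    qed
    then show ?thesis using vv_mono P Q by metis
  qed
  have "supp (phi f) \<in> K2"
    unfolding order_complex_def using finite_subset[OF suppR finR] inPP chain by blast
  then have "phi f \<in> realization_carrier K2"
    by (intro carrier_intro[OF _ finR suppR s1] phi_nonneg[OF f])
  then show ?thesis using suppR R_def by blast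
qed

lemma phi_cont: "continuous_on (realization_carrier K1) phi"
proof (rule continuous_on_coordinatewise_then_product)
  fix p
  have n: "continuous_on (realization_carrier K1) (\<lambda>f. phi0 f p)"
  proof (cases "SS b p \<noteq> {} \<and> p = vv a b (SS b p)")
    case True
    then have eq: "(\<lambda>f. phi0 f p) = (\<lambda>f. max 0 (gap f (SS b p)))" by (simp add: phi0_def fun_eq_iff)
    show ?thesis unfolding eq using True
      by (intro continuous_on_max continuous_on_const gap_cont) auto
  next
    case False
    then have eq: "(\<lambda>f. phi0 f p) = (\<lambda>f. 0)" by (auto simp: phi0_def fun_eq_iff)
    show ?thesis unfolding eq by (rule continuous_on_const)
  qed
  have d: "continuous_on (realization_carrier K1) D1"
    unfolding D1_def by (intro continuous_on_sum continuous_on_max continuous_on_const gap_cont) auto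
  show "continuous_on (realization_carrier K1) (\<lambda>f. phi f p)"
  proof -
    have nz: "\<And>f. f \<in> realization_carrier K1 \<Longrightarrow> D1 f \<noteq> 0" using D1_pos by (metis less_irrefl)
    show ?thesis unfolding phi_def by (intro continuous_on_divide n d ballI nz)
  qed
qed

end



context nset begin

definition psi0 :: "(('n \<Rightarrow> nat) \<Rightarrow> real) \<Rightarrow> 'n \<Rightarrow> real" where
  "psi0 g i = sum g {c \<in> supp g. i \<in> SS b c}"
definition D2 :: "(('n \<Rightarrow> nat) \<Rightarrow> real) \<Rightarrow> real" where
  "D2 g = (\<Sum>i\<in>UNIV. psi0 g i)"
definition psi :: "(('n \<Rightarrow> nat) \<Rightarrow> real) \<Rightarrow> 'n \<Rightarrow> real" where
  "psi g = (\<lambda>i. psi0 g i / D2 g)"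

lemma K2_supp:
  assumes "g \<in> realization_carrier K2"
  shows "finite (supp g)" "supp g \<subseteq> PP a b J" "\<forall>x\<in>supp g. \<forall>y\<in>supp g. x \<le> y \<or> y \<le> x"
  using carrier_D(3)[OF assms] unfolding order_complex_def by auto

lemma psi0_nonneg: "g \<in> realization_carrier K2 \<Longrightarrow> 0 \<le> psi0 g i"
  unfolding psi0_def by (intro sum_nonneg) (auto dest: carrier_D(1))

lemma D2_pos:
  assumes g: "g \<in> realization_carrier K2"
  shows "0 < D2 g"
proof -
  obtain c where c: "c \<in> supp g" using carrier_supp_ne[OF g] by blast
  have "c \<in> PP a b J" using c K2_supp(2)[OF g] by blast
  then obtain i where i: "i \<in> SS b c" using PP_SS_ne by blast
  have gc: "0 < g c" using c carrier_D(1)[OF g, of c] by (auto simp: supp_def)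
  have "g c \<le> psi0 g i" unfolding psi0_def
    by (rule member_le_sum) (use c i K2_supp(1)[OF g] carrier_D(1)[OF g] in auto)
  also have "\<dots> \<le> D2 g" unfolding D2_def
    by (rule member_le_sum) (use psi0_nonneg[OF g] in auto)
  finally show ?thesis using gc by simp
qed

lemma psi_nonneg: "g \<in> realization_carrier K2 \<Longrightarrow> 0 \<le> psi g i"
proof -
  assume g: "g \<in> realization_carrier K2"
  show ?thesis using psi0_nonneg[OF g, of i] D2_pos[OF g] by (simp add: psi_def)
qed

lemma psi_carrier:
  assumes g: "g \<in> realization_carrier K2"
  shows "psi g \<in> realization_carrier K1"
proof -
  obtain m where m: "m \<in> supp g" "\<And>c. c \<in> supp g \<Longrightarrow> c \<le> m"
    using chain_max[OF K2_supp(1)[OF g] carrier_supp_ne[OF g] K2_supp(3)[OF g]] by blast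
  have mP: "m \<in> PP a b J" using m K2_supp(2)[OF g] by blast
  define R where "R = SS b m"
  have finR: "finite R" by simp
  have sub: "\<And>G. G \<subseteq> R \<Longrightarrow> G \<noteq> {} \<Longrightarrow> G \<in> K1"
    using dclosed_K1 SS_K1[OF mP] unfolding dclosed_def R_def by blast
  have zero: "psi g v = 0" if "v \<notin> R" for v
  proof -
    have e: "{c \<in> supp g. v \<in> SS b c} = {}" using that m(2) SS_mono unfolding R_def by blast
    show ?thesis unfolding psi_def psi0_def e by simp
  qed
  have "sum (psi g) R = sum (psi g) UNIV"
    by (rule sum.mono_neutral_left) (auto simp: zero)
  also have "\<dots> = 1" using D2_pos[OF g] by (simp add: psi_def D2_def sum_divide_distrib[symmetric])
  finally have "sum (psi g) R = 1" .
  then have "psi g \<in> realization_carrier K1 \<and> supp (psi g) \<subseteq> R"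
    using carrier_iff[OF finR sub] psi_nonneg[OF g] zero by blast
  then show ?thesis by blast
qed

lemma psi_cont:
  assumes finR: "finite R"
  shows "continuous_on {g \<in> realization_carrier K2. supp g \<subseteq> R} psi"
proof -
  let ?S = "{g \<in> realization_carrier K2. supp g \<subseteq> R}"
  have eq0: "psi0 g i = sum g {c \<in> R. i \<in> SS b c}" if "g \<in> ?S" for g i
    unfolding psi0_def
    by (rule sum.mono_neutral_left) (use that finR in \<open>auto simp: supp_def\<close>)
  have eq: "psi g i = sum g {c \<in> R. i \<in> SS b c} / (\<Sum>j\<in>UNIV. sum g {c \<in> R. j \<in> SS b c})"
    if "g \<in> ?S" for g i
    unfolding psi_def D2_def using eq0[OF that] by simp
  show ?thesis
  proof (rule continuous_on_coordinatewise_then_product)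
    fix i
    have "continuous_on ?S (\<lambda>g. sum g {c \<in> R. i \<in> SS b c} / (\<Sum>j\<in>UNIV. sum g {c \<in> R. j \<in> SS b c}))"
    proof (intro continuous_on_divide continuous_on_sum cont_coord ballI)
      fix g assume g: "g \<in> ?S"
      have "(\<Sum>j\<in>UNIV. sum g {c \<in> R. j \<in> SS b c}) = D2 g" unfolding D2_def using eq0[OF g] by simp
      moreover have "0 < D2 g" using g by (intro D2_pos) simp
      ultimately show "(\<Sum>j\<in>UNIV. sum g {c \<in> R. j \<in> SS b c}) \<noteq> 0" by simp
    qed
    then show "continuous_on ?S (\<lambda>g. psi g i)"
      by (rule continuous_on_eq) (simp add: eq)
  qed
qed

lemma psiphi_supp:
  assumes f: "f \<in> realization_carrier K1"
  shows "supp (psi (phi f)) \<subseteq> supp f"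
proof
  fix i assume "i \<in> supp (psi (phi f))"
  then have "psi0 (phi f) i \<noteq> 0" by (simp add: supp_def psi_def)
  then obtain c where c: "c \<in> supp (phi f)" "i \<in> SS b c" unfolding psi0_def
    by (metis (mono_tags, lifting) empty_Collect_eq sum.empty)
  have "phi f c \<noteq> 0" using c by (simp add: supp_def)
  note nz = phi_nz[OF this]
  have "0 < f i" using gap_pos(1)[OF _ _ c(2)] nz by blast
  then show "i \<in> supp f" by (simp add: supp_def)
qed

lemma phipsi_supp:
  assumes g: "g \<in> realization_carrier K2"
  shows "supp (phi (psi g)) \<subseteq> rr a b ` supp g"
proof
  fix p assume "p \<in> supp (phi (psi g))"
  then have "phi (psi g) p \<noteq> 0" by (simp add: supp_def)
  note nz = phi_nz[OF this]
  define G where "G = SS b p"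
  have Gne: "G \<noteq> {}" and pG: "p = vv a b G" and gp: "gap (psi g) G > 0" using nz G_def by auto
  define x where "x = psi g"
  define T where "T i = {c \<in> supp g. i \<in> SS b c}" for i
  have xT: "x i = sum g (T i) / D2 g" for i by (simp add: x_def psi_def psi0_def T_def)
  have finT: "finite (T i)" for i using K2_supp(1)[OF g] T_def by auto
  have mono: "x i1 \<le> x i" if "T i1 \<subseteq> T i" for i1 i
  proof -
    have "sum g (T i1) \<le> sum g (T i)"
      by (rule sum_mono2[OF finT that]) (use carrier_D(1)[OF g] in auto)
    then show ?thesis unfolding xT using D2_pos[OF g] by (simp add: divide_right_mono)
  qed
  have pos: "T i \<noteq> {}" if "0 < x i" for i
    using that unfolding xT by auto
  have up: "c' \<in> T i" if "c \<in> T i" "c' \<in> supp g" "c \<le> c'" for c c' i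
    using that SS_mono unfolding T_def by blast
  have chn: "\<forall>x\<in>supp g. \<forall>y\<in>supp g. x \<le> y \<or> y \<le> x" using K2_supp(3)[OF g] .
  have nest: "T i \<subseteq> T j \<or> T j \<subseteq> T i" for i j
  proof (rule ccontr)
    assume "\<not> ?thesis"
    then obtain c1 c2 where c: "c1 \<in> T i" "c1 \<notin> T j" "c2 \<in> T j" "c2 \<notin> T i" by blast
    have "c1 \<in> supp g" "c2 \<in> supp g" using c T_def by auto
    then have "c1 \<le> c2 \<or> c2 \<le> c1" using chn by blast
    then show False using up c \<open>c1 \<in> supp g\<close> \<open>c2 \<in> supp g\<close> by blast
  qed
  obtain i1 where i1: "i1 \<in> G" "\<And>i. i \<in> G \<Longrightarrow> card (T i1) \<le> card (T i)"
    using ex_has_least_nat[of "\<lambda>i. i \<in> G" _ "\<lambda>i. card (T i)"] Gne by blast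
  have minT: "T i1 \<subseteq> T i" if "i \<in> G" for i
  proof (rule ccontr)
    assume "\<not> T i1 \<subseteq> T i"
    then have "T i \<subset> T i1" using nest by blast
    then have "card (T i) < card (T i1)" using finT psubset_card_mono by blast
    then show False using i1(2)[OF that] by simp
  qed
  have x1: "0 < x i1" using gap_pos(1)[OF Gne _ i1(1)] gp x_def by blast
  have Tne: "T i1 \<noteq> {}" using pos[OF x1] .
  have Tsub: "T i1 \<subseteq> supp g" unfolding T_def by auto
  obtain c where c: "c \<in> T i1" "\<And>c'. c' \<in> T i1 \<Longrightarrow> c \<le> c'"
    using chain_min[OF finT Tne] chn Tsub by (metis subsetD)
  have cs: "c \<in> supp g" using c Tsub by blast
  have "G = SS b c"
  proof
    show "G \<subseteq> SS b c"
    proof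
      fix i assume "i \<in> G"
      then have "c \<in> T i" using minT c(1) by blast
      then show "i \<in> SS b c" unfolding T_def by blast
    qed
  next
    show "SS b c \<subseteq> G"
    proof
      fix i assume i: "i \<in> SS b c"
      show "i \<in> G"
      proof (rule ccontr)
        assume iG: "i \<notin> G"
        have ci: "c \<in> T i" using i cs T_def by blast
        have "T i1 \<subseteq> T i"
        proof
          fix c' assume "c' \<in> T i1"
          then show "c' \<in> T i" using up[OF ci] c(2) Tsub by blast
        qed
        then have "x i1 \<le> x i" by (rule mono)
        moreover have "x i < x i1" using gap_pos(2)[OF Gne _ i1(1) iG] gp x_def by blast
        ultimately show False by simp
      qed
    qed
  qed
  then have "p = rr a b c" using pG by (simp add: rr_def)
  then show "p \<in> rr a b ` supp g" using cs by blast
qed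

end



definition AA :: "real \<Rightarrow> real \<Rightarrow> real \<Rightarrow> real" where "AA t l x = max 0 (l + x - max l t)"
definition BB :: "real \<Rightarrow> real \<Rightarrow> real \<Rightarrow> real" where "BB t l x = max 0 (min (l + x) t - l)"

lemma cont_snd_coord: "continuous_on S (\<lambda>z::'x::topological_space \<times> ('a \<Rightarrow> 'b::topological_space). snd z c)"
proof -
  have "continuous_on S (\<lambda>z::'x \<times> ('a \<Rightarrow> 'b). snd z)" by (rule continuous_on_snd[OF continuous_on_id])
  then show ?thesis by (rule continuous_on_product_then_coordinatewise)
qed

lemma cAA: "continuous_on S f \<Longrightarrow> continuous_on S g \<Longrightarrow> continuous_on S h \<Longrightarrow> continuous_on S (\<lambda>x. AA (f x) (g x) (h x))"
  unfolding AA_def by (intro continuous_intros)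
lemma cBB: "continuous_on S f \<Longrightarrow> continuous_on S g \<Longrightarrow> continuous_on S h \<Longrightarrow> continuous_on S (\<lambda>x. BB (f x) (g x) (h x))"
  unfolding BB_def by (intro continuous_intros)

lemma AB0: "AA t l 0 = 0" "BB t l 0 = 0"
  by (auto simp: AA_def BB_def max_def min_def)

lemma AB_sum: "0 \<le> x \<Longrightarrow> AA t l x + BB t l x = x"
  by (auto simp: AA_def BB_def max_def min_def)

lemma prism_expr_cont:
  fixes C :: "'c::order set" and D :: "(real \<times> ('c \<Rightarrow> real)) set"
  shows "continuous_on D (\<lambda>z. (\<Sum>c\<in>{c \<in> C. c = p}. AA (fst z) (sum (snd z) {c' \<in> C. c' < c}) (snd z c)) +
              (\<Sum>c\<in>{c \<in> C. r c = p}. BB (fst z) (sum (snd z) {c' \<in> C. c' < c}) (snd z c)))"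
  apply (rule continuous_on_add)
   apply (rule continuous_on_sum)
   apply (rule cAA)
     apply (rule continuous_on_fst[OF continuous_on_id])
    apply (rule continuous_on_sum)
    apply (rule cont_snd_coord)
   apply (rule cont_snd_coord)
  apply (rule continuous_on_sum)
  apply (rule cBB)
    apply (rule continuous_on_fst[OF continuous_on_id])
   apply (rule continuous_on_sum)
   apply (rule cont_snd_coord)
  apply (rule cont_snd_coord)
  done

context nset begin

definition rpush :: "(('n \<Rightarrow> nat) \<Rightarrow> real) \<Rightarrow> ('n \<Rightarrow> nat) \<Rightarrow> real" where
  "rpush g = (\<lambda>p. sum g {c \<in> supp g. rr a b c = p})"

definition lo :: "(('n \<Rightarrow> nat) \<Rightarrow> real) \<Rightarrow> ('n \<Rightarrow> nat) \<Rightarrow> real" where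
  "lo g c = sum g {c' \<in> supp g. c' < c}"

definition prism :: "real \<Rightarrow> (('n \<Rightarrow> nat) \<Rightarrow> real) \<Rightarrow> ('n \<Rightarrow> nat) \<Rightarrow> real" where
  "prism t g = (\<lambda>p. (\<Sum>c\<in>{c \<in> supp g. c = p}. AA t (lo g c) (g c)) +
                    (\<Sum>c\<in>{c \<in> supp g. rr a b c = p}. BB t (lo g c) (g c)))"

lemma rr_chain:
  assumes g: "g \<in> realization_carrier K2" and G: "G \<subseteq> rr a b ` supp g"
  shows "G \<in> K2"
proof -
  have fin: "finite G" using G K2_supp(1)[OF g] finite_subset by blast
  have "G \<subseteq> PP a b J" using G K2_supp(2)[OF g] rr_PP by blast
  moreover have "\<forall>x\<in>G. \<forall>y\<in>G. x \<le> y \<or> y \<le> x"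
    using G K2_supp(3)[OF g] rr_mono by blast
  ultimately show ?thesis using fin unfolding order_complex_def by blast
qed

lemma rpush_carrier:
  assumes g: "g \<in> realization_carrier K2"
  shows "rpush g \<in> realization_carrier K2 \<and> supp (rpush g) \<subseteq> rr a b ` supp g"
proof -
  define R where "R = rr a b ` supp g"
  have finS: "finite (supp g)" using K2_supp(1)[OF g] .
  have finR: "finite R" unfolding R_def using finS by simp
  have sub: "\<And>G. G \<subseteq> R \<Longrightarrow> G \<noteq> {} \<Longrightarrow> G \<in> K2" using rr_chain[OF g] R_def by blast
  have nn: "\<forall>v. 0 \<le> rpush g v" unfolding rpush_def
    using carrier_D(1)[OF g] by (auto intro: sum_nonneg)
  have z: "\<forall>v. v \<notin> R \<longrightarrow> rpush g v = 0"
  proof (intro allI impI)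
    fix v assume "v \<notin> R"
    then have e: "{c \<in> supp g. rr a b c = v} = {}" unfolding R_def by blast
    show "rpush g v = 0" unfolding rpush_def e by simp
  qed
  have "sum (rpush g) R = sum g (supp g)" unfolding rpush_def
    by (rule sum.group[OF finS finR]) (simp add: R_def)
  then have "sum (rpush g) R = 1" using carrier_D(4)[OF g] by simp
  then show ?thesis using carrier_iff[OF finR sub] nn z R_def by blast
qed

lemma lo_nonneg: "g \<in> realization_carrier K2 \<Longrightarrow> 0 \<le> lo g c"
  unfolding lo_def by (intro sum_nonneg) (auto dest: carrier_D(1))

lemma lo_step:
  assumes g: "g \<in> realization_carrier K2" and c: "c \<in> supp g"
  shows "lo g c + g c = sum g (insert c {c' \<in> supp g. c' < c})"
proof -
  have "finite {c' \<in> supp g. c' < c}" using K2_supp(1)[OF g] by simp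
  then show ?thesis unfolding lo_def by (simp add: sum.insert)
qed

lemma lo_le1:
  assumes g: "g \<in> realization_carrier K2" and c: "c \<in> supp g"
  shows "lo g c + g c \<le> 1"
proof -
  have "sum g (insert c {c' \<in> supp g. c' < c}) \<le> sum g (supp g)"
    by (rule sum_mono2) (use K2_supp(1)[OF g] c carrier_D(1)[OF g] in auto)
  then show ?thesis using lo_step[OF g c] carrier_D(4)[OF g] by simp
qed

lemma lo_mono:
  assumes g: "g \<in> realization_carrier K2" and c1: "c1 \<in> supp g" and c2: "c2 \<in> supp g" and lt: "c1 < c2"
  shows "lo g c1 + g c1 \<le> lo g c2"
proof -
  have "sum g (insert c1 {c' \<in> supp g. c' < c1}) \<le> sum g {c' \<in> supp g. c' < c2}"
    by (rule sum_mono2) (use K2_supp(1)[OF g] c1 lt carrier_D(1)[OF g] in \<open>auto intro: less_trans\<close>)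
  then show ?thesis using lo_step[OF g c1] unfolding lo_def by simp
qed

lemma prism0:
  assumes g: "g \<in> realization_carrier K2"
  shows "prism 0 g = g"
proof
  fix p
  have B0: "BB 0 (lo g c) (g c) = 0" for c
    using lo_nonneg[OF g, of c] carrier_D(1)[OF g, of c] by (simp add: BB_def)
  have A0: "AA 0 (lo g c) (g c) = g c" for c
    using lo_nonneg[OF g, of c] carrier_D(1)[OF g, of c] by (simp add: AA_def)
  show "prism 0 g p = g p"
  proof (cases "p \<in> supp g")
    case True
    then have e: "{c \<in> supp g. c = p} = {p}" by auto
    show ?thesis unfolding prism_def e by (simp add: B0 A0)
  next
    case False
    then have e: "{c \<in> supp g. c = p} = {}" by auto
    show ?thesis unfolding prism_def e using False by (simp add: B0 supp_def)
  qed
qed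

lemma prism1:
  assumes g: "g \<in> realization_carrier K2"
  shows "prism 1 g = rpush g"
proof
  fix p
  have A1: "AA 1 (lo g c) (g c) = 0" if "c \<in> supp g" for c
    using lo_le1[OF g that] by (simp add: AA_def)
  have B1: "BB 1 (lo g c) (g c) = g c" if "c \<in> supp g" for c
    using lo_le1[OF g that] carrier_D(1)[OF g, of c] by (simp add: BB_def)
  have "(\<Sum>c\<in>{c \<in> supp g. c = p}. AA 1 (lo g c) (g c)) = 0" by (rule sum.neutral) (use A1 in auto)
  moreover have "(\<Sum>c\<in>{c \<in> supp g. rr a b c = p}. BB 1 (lo g c) (g c)) = sum g {c \<in> supp g. rr a b c = p}"
    by (rule sum.cong) (auto simp: B1)
  ultimately show "prism 1 g p = rpush g p"
    unfolding prism_def rpush_def by simp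
qed

lemma prism_chain:
  assumes g: "g \<in> realization_carrier K2"
    and c1: "c1 \<in> supp g" "t < lo g c1 + g c1" and c2: "c2 \<in> supp g" "lo g c2 < t"
  shows "c1 \<le> rr a b c2 \<or> rr a b c2 \<le> c1"
proof -
  have c2P: "c2 \<in> PP a b J" using c2 K2_supp(2)[OF g] by blast
  have "c1 \<le> c2 \<or> c2 \<le> c1" using K2_supp(3)[OF g] c1 c2 by blast
  moreover have "\<not> c1 < c2"
  proof
    assume "c1 < c2"
    then have "lo g c1 + g c1 \<le> lo g c2" by (rule lo_mono[OF g c1(1) c2(1)])
    then show False using c1 c2 by simp
  qed
  ultimately have "c2 \<le> c1" by (auto simp: less_le)
  then show ?thesis using rr_le[OF c2P] by (blast intro: order.trans)
qed

lemma prism_carrier: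
  assumes g: "g \<in> realization_carrier K2"
  shows "prism t g \<in> realization_carrier K2 \<and> supp (prism t g) \<subseteq> supp g \<union> rr a b ` supp g"
proof -
  define S where "S = supp g"
  define R' where "R' = S \<union> rr a b ` S"
  define Rc where "Rc = {c \<in> S. t < lo g c + g c} \<union> rr a b ` {c \<in> S. lo g c < t}"
  have finS: "finite S" using K2_supp(1)[OF g] S_def by simp
  have finR': "finite R'" using finS R'_def by simp
  have nn: "\<And>v. 0 \<le> prism t g v" unfolding prism_def AA_def BB_def by (intro add_nonneg_nonneg sum_nonneg) auto
  have suppRc: "supp (prism t g) \<subseteq> Rc"
  proof
    fix p assume "p \<in> supp (prism t g)"
    then have "prism t g p \<noteq> 0" by (simp add: supp_def)
    then have "(\<Sum>c\<in>{c \<in> supp g. c = p}. AA t (lo g c) (g c)) \<noteq> 0 \<or>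
               (\<Sum>c\<in>{c \<in> supp g. rr a b c = p}. BB t (lo g c) (g c)) \<noteq> 0"
      unfolding prism_def by auto
    then show "p \<in> Rc"
    proof
      assume "(\<Sum>c\<in>{c \<in> supp g. c = p}. AA t (lo g c) (g c)) \<noteq> 0"
      then obtain c where c: "c \<in> {c \<in> supp g. c = p}" "AA t (lo g c) (g c) \<noteq> 0"
        by (rule sum.not_neutral_contains_not_neutral)
      then have "t < lo g c + g c" unfolding AA_def by (auto simp: max_def split: if_splits)
      then show ?thesis unfolding Rc_def S_def using c by blast
    next
      assume "(\<Sum>c\<in>{c \<in> supp g. rr a b c = p}. BB t (lo g c) (g c)) \<noteq> 0"
      then obtain c where c0: "c \<in> {c \<in> supp g. rr a b c = p}" "BB t (lo g c) (g c) \<noteq> 0"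
        by (rule sum.not_neutral_contains_not_neutral)
      then have c: "c \<in> supp g" "rr a b c = p" "BB t (lo g c) (g c) \<noteq> 0" by auto
      then have "lo g c < t" unfolding BB_def by (auto simp: max_def min_def split: if_splits)
      then show ?thesis unfolding Rc_def S_def using c by blast
    qed
  qed
  have RcR': "Rc \<subseteq> R'" unfolding Rc_def R'_def by blast
  have suppR': "supp (prism t g) \<subseteq> R'" using suppRc RcR' by blast
  have "sum (prism t g) R' = (\<Sum>p\<in>R'. \<Sum>c\<in>{c \<in> S. c = p}. AA t (lo g c) (g c)) +
                             (\<Sum>p\<in>R'. \<Sum>c\<in>{c \<in> S. rr a b c = p}. BB t (lo g c) (g c))"
    unfolding prism_def S_def by (simp add: sum.distrib)
  also have "\<dots> = (\<Sum>c\<in>S. AA t (lo g c) (g c)) + (\<Sum>c\<in>S. BB t (lo g c) (g c))"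
  proof -
    have "(\<Sum>p\<in>R'. \<Sum>c\<in>{c \<in> S. c = p}. AA t (lo g c) (g c)) = (\<Sum>c\<in>S. AA t (lo g c) (g c))"
      using sum.group[OF finS finR', of "\<lambda>c. c" "\<lambda>c. AA t (lo g c) (g c)"] R'_def by simp
    moreover have "(\<Sum>p\<in>R'. \<Sum>c\<in>{c \<in> S. rr a b c = p}. BB t (lo g c) (g c)) = (\<Sum>c\<in>S. BB t (lo g c) (g c))"
      using sum.group[OF finS finR', of "rr a b" "\<lambda>c. BB t (lo g c) (g c)"] R'_def by simp
    ultimately show ?thesis by simp
  qed
  also have "\<dots> = sum g S" unfolding sum.distrib[symmetric]
    by (rule sum.cong) (auto intro: AB_sum carrier_D(1)[OF g])
  also have "\<dots> = 1" using carrier_D(4)[OF g] S_def by simp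
  finally have s1: "sum (prism t g) R' = 1" .
  have RcP: "Rc \<subseteq> PP a b J" unfolding Rc_def S_def using K2_supp(2)[OF g] rr_PP by blast
  have Rcc: "\<forall>x\<in>Rc. \<forall>y\<in>Rc. x \<le> y \<or> y \<le> x"
  proof (intro ballI)
    fix x y assume x: "x \<in> Rc" and y: "y \<in> Rc"
    have ch: "\<forall>x\<in>supp g. \<forall>y\<in>supp g. x \<le> y \<or> y \<le> x" using K2_supp(3)[OF g] .
    show "x \<le> y \<or> y \<le> x"
      using x y unfolding Rc_def S_def
    proof (elim UnE)
      assume "x \<in> {c \<in> supp g. t < lo g c + g c}" "y \<in> {c \<in> supp g. t < lo g c + g c}"
      then show ?thesis using ch by blast
    next
      assume "x \<in> {c \<in> supp g. t < lo g c + g c}" "y \<in> rr a b ` {c \<in> supp g. lo g c < t}"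
      then show ?thesis using prism_chain[OF g] by blast
    next
      assume "x \<in> rr a b ` {c \<in> supp g. lo g c < t}" "y \<in> {c \<in> supp g. t < lo g c + g c}"
      then show ?thesis using prism_chain[OF g] by blast
    next
      assume "x \<in> rr a b ` {c \<in> supp g. lo g c < t}" "y \<in> rr a b ` {c \<in> supp g. lo g c < t}"
      then show ?thesis using ch rr_mono by blast
    qed
  qed
  have f1: "finite (supp (prism t g))" using finite_subset[OF suppR' finR'] .
  have f2: "supp (prism t g) \<subseteq> PP a b J" using suppRc RcP by (rule order.trans)
  have f3: "\<forall>x\<in>supp (prism t g). \<forall>y\<in>supp (prism t g). x \<le> y \<or> y \<le> x" using suppRc Rcc by blast
  have "supp (prism t g) \<in> K2"
    unfolding order_complex_def using f1 f2 f3 by blast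
  then have "prism t g \<in> realization_carrier K2" by (intro carrier_intro[OF nn finR' suppR' s1])
  then show ?thesis using suppR' R'_def S_def by blast
qed

lemma prism_cont:
  assumes C: "C \<in> K2"
  shows "continuous_on ({0..1} \<times> closed_simplex K2 C) (\<lambda>z. prism (fst z) (snd z))"
proof -
  let ?D = "{0..1::real} \<times> closed_simplex K2 C"
  have finC: "finite C" using C unfolding order_complex_def by blast
  define lo' where "lo' g c = sum g {c' \<in> C. c' < c}" for g :: "('n \<Rightarrow> nat) \<Rightarrow> real" and c
  have eq: "prism t g p = (\<Sum>c\<in>{c \<in> C. c = p}. AA t (lo' g c) (g c)) + (\<Sum>c\<in>{c \<in> C. rr a b c = p}. BB t (lo' g c) (g c))"
    if "g \<in> closed_simplex K2 C" for t g p
  proof -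
    have sC: "supp g \<subseteq> C" using that by (simp add: closed_simplex_eq)
    have l: "lo g c = lo' g c" for c unfolding lo_def lo'_def
      by (rule sum.mono_neutral_left) (use finC sC in \<open>auto simp: supp_def\<close>)
    have z: "g c = 0" if "c \<notin> supp g" for c using that by (simp add: supp_def)
    have e1: "(\<Sum>c\<in>{c \<in> supp g. c = p}. AA t (lo g c) (g c)) = (\<Sum>c\<in>{c \<in> C. c = p}. AA t (lo g c) (g c))"
      using finC sC by (intro sum.mono_neutral_left) (auto simp: supp_def AB0)
    have e2: "(\<Sum>c\<in>{c \<in> supp g. rr a b c = p}. BB t (lo g c) (g c)) = (\<Sum>c\<in>{c \<in> C. rr a b c = p}. BB t (lo g c) (g c))"
      using finC sC by (intro sum.mono_neutral_left) (auto simp: supp_def AB0)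
    show ?thesis unfolding prism_def e1 e2 by (simp add: l)
  qed
  show ?thesis
  proof (rule continuous_on_coordinatewise_then_product)
    fix p
    have "continuous_on ?D (\<lambda>z. (\<Sum>c\<in>{c \<in> C. c = p}. AA (fst z) (lo' (snd z) c) (snd z c)) +
              (\<Sum>c\<in>{c \<in> C. rr a b c = p}. BB (fst z) (lo' (snd z) c) (snd z c)))"
      unfolding lo'_def by (rule prism_expr_cont)
    then show "continuous_on ?D (\<lambda>z. prism (fst z) (snd z) p)"
    proof (rule continuous_on_eq)
      fix z assume "z \<in> ?D"
      then have "snd z \<in> closed_simplex K2 C" by auto
      then show "(\<Sum>c\<in>{c \<in> C. c = p}. AA (fst z) (lo' (snd z) c) (snd z c)) +
              (\<Sum>c\<in>{c \<in> C. rr a b c = p}. BB (fst z) (lo' (snd z) c) (snd z c)) = prism (fst z) (snd z) p"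
        by (rule eq[symmetric])
    qed
  qed
qed

end



lemma GR_hom_fin:
  fixes h :: "real \<times> ('v \<Rightarrow> real) \<Rightarrow> ('w::finite \<Rightarrow> real)"
  assumes dL: "dclosed L"
  and loc: "\<And>F. F \<in> K \<Longrightarrow> continuous_on ({0..1} \<times> closed_simplex K F) h \<and>
       (\<forall>p \<in> {0..1} \<times> closed_simplex K F. h p \<in> realization_carrier L)"
  and f: "\<And>x. x \<in> realization_carrier K \<Longrightarrow> h (0,x) = f x"
  and g: "\<And>x. x \<in> realization_carrier K \<Longrightarrow> h (1,x) = g x"
  shows "homotopic_with (\<lambda>_. True) (geometric_realization K) (geometric_realization L) f g"
proof (rule GR_hom[OF dL _ f g])
  fix F assume "F \<in> K"
  then show "\<exists>H. finite H \<and> continuous_on ({0..1} \<times> closed_simplex K F) h \<and>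
       (\<forall>p \<in> {0..1} \<times> closed_simplex K F. h p \<in> realization_carrier L \<and> supp (h p) \<subseteq> H)"
    using loc by (intro exI[of _ UNIV]) auto
qed auto

context nset begin

lemma psiphi_cont: "continuous_on (realization_carrier K1) (\<lambda>f. psi (phi f))"
  by (rule continuous_on_compose2[OF psi_cont[of "vv a b ` {G. G \<noteq> {}}"] phi_cont]) (use phi_carrier in auto)

theorem main_nset: "geometric_realization K1 homotopy_equivalent_space geometric_realization K2"
proof -
  have c_phi: "continuous_map (geometric_realization K1) (geometric_realization K2) phi"
  proof (rule GR_cont[OF dclosed_oc])
    fix F assume F: "F \<in> K1"
    have sub: "closed_simplex K1 F \<subseteq> realization_carrier K1" by (rule simplex_sub_carrier)
    have c: "continuous_on (closed_simplex K1 F) phi" using continuous_on_subset[OF phi_cont sub] .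
    show "\<exists>H. finite H \<and> continuous_on (closed_simplex K1 F) phi \<and>
       (\<forall>x\<in>closed_simplex K1 F. phi x \<in> realization_carrier K2 \<and> supp (phi x) \<subseteq> H)"
      using phi_carrier sub c by (intro exI[of _ "vv a b ` {G. G \<noteq> {}}"]) auto
  qed
  have c_psi: "continuous_map (geometric_realization K2) (geometric_realization K1) psi"
  proof (rule GR_cont[OF dclosed_K1])
    fix F assume F: "F \<in> K2"
    have finF: "finite F" using F by (simp add: order_complex_def)
    have eq: "closed_simplex K2 F = {g \<in> realization_carrier K2. supp g \<subseteq> F}" by (rule closed_simplex_eq)
    show "\<exists>H. finite H \<and> continuous_on (closed_simplex K2 F) psi \<and>
       (\<forall>x\<in>closed_simplex K2 F. psi x \<in> realization_carrier K1 \<and> supp (psi x) \<subseteq> H)"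
      unfolding eq using psi_cont[OF finF] psi_carrier by (intro exI[of _ UNIV]) auto
  qed
  have h1: "homotopic_with (\<lambda>_. True) (geometric_realization K1) (geometric_realization K1) (psi \<circ> phi) id"
  proof (rule GR_hom_fin[OF dclosed_K1, where h = "\<lambda>z. (\<lambda>i. (1 - fst z) * psi (phi (snd z)) i + fst z * snd z i)"])
    fix F assume F: "F \<in> K1"
    let ?D = "{0..1::real} \<times> closed_simplex K1 F"
    have cont: "continuous_on ?D (\<lambda>z. (\<lambda>i. (1 - fst z) * psi (phi (snd z)) i + fst z * snd z i))"
    proof (rule continuous_on_coordinatewise_then_product)
      fix i
      have c1: "continuous_on ?D (\<lambda>z. psi (phi (snd z)))"
        by (rule continuous_on_compose2[OF psiphi_cont continuous_on_snd[OF continuous_on_id]])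
           (use simplex_sub_carrier in auto)
      show "continuous_on ?D (\<lambda>z. (1 - fst z) * psi (phi (snd z)) i + fst z * snd z i)"
        by (intro continuous_on_add continuous_on_mult continuous_on_diff continuous_on_const
            continuous_on_fst[OF continuous_on_id] cont_coord2[OF c1] cont_snd_coord)
    qed
    have img: "\<forall>p\<in>?D. (\<lambda>z. (\<lambda>i. (1 - fst z) * psi (phi (snd z)) i + fst z * snd z i)) p \<in> realization_carrier K1"
    proof
      fix p assume p: "p \<in> ?D"
      obtain t f where tf: "p = (t,f)" "t \<in> {0..1}" "f \<in> closed_simplex K1 F" using p by auto
      have fc: "f \<in> realization_carrier K1" using tf simplex_sub_carrier by blast
      have sF: "supp f \<in> K1" "finite (supp f)" using carrier_D[OF fc] by auto
      have sub: "\<And>G. G \<subseteq> supp f \<Longrightarrow> G \<noteq> {} \<Longrightarrow> G \<in> K1" using dclosed_K1 sF unfolding dclosed_def by blast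
      have u: "psi (phi f) \<in> realization_carrier K1" "supp (psi (phi f)) \<subseteq> supp f"
        using psi_carrier phi_carrier[OF fc] psiphi_supp[OF fc] by auto
      have "(\<lambda>i. (1-t) * psi (phi f) i + t * f i) \<in> realization_carrier K1"
        using comb_carrier[OF sF(2) sub u fc order_refl tf(2)] by blast
      then show "(\<lambda>z. (\<lambda>i. (1 - fst z) * psi (phi (snd z)) i + fst z * snd z i)) p \<in> realization_carrier K1"
        using tf by simp
    qed
    show "continuous_on ?D (\<lambda>z. (\<lambda>i. (1 - fst z) * psi (phi (snd z)) i + fst z * snd z i)) \<and>
       (\<forall>p \<in> ?D. (\<lambda>z. (\<lambda>i. (1 - fst z) * psi (phi (snd z)) i + fst z * snd z i)) p \<in> realization_carrier K1)"
      using cont img by blast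
  qed (simp_all add: fun_eq_iff)
  have h2a: "homotopic_with (\<lambda>_. True) (geometric_realization K2) (geometric_realization K2) id rpush"
  proof (rule GR_hom[OF dclosed_oc, where h = "\<lambda>z. prism (fst z) (snd z)"])
    fix F assume F: "F \<in> K2"
    have finF: "finite F" using F by (simp add: order_complex_def)
    have img: "\<forall>p\<in>{0..1} \<times> closed_simplex K2 F. prism (fst p) (snd p) \<in> realization_carrier K2 \<and>
                 supp (prism (fst p) (snd p)) \<subseteq> F \<union> rr a b ` F"
    proof
      fix p assume p: "p \<in> {0..1::real} \<times> closed_simplex K2 F"
      then have gc: "snd p \<in> realization_carrier K2" "supp (snd p) \<subseteq> F"
        by (auto simp: closed_simplex_eq)
      show "prism (fst p) (snd p) \<in> realization_carrier K2 \<and> supp (prism (fst p) (snd p)) \<subseteq> F \<union> rr a b ` F"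
        using prism_carrier[OF gc(1), of "fst p"] gc(2) by blast
    qed
    show "\<exists>H. finite H \<and> continuous_on ({0..1} \<times> closed_simplex K2 F) (\<lambda>z. prism (fst z) (snd z)) \<and>
       (\<forall>p\<in>{0..1} \<times> closed_simplex K2 F. prism (fst p) (snd p) \<in> realization_carrier K2 \<and> supp (prism (fst p) (snd p)) \<subseteq> H)"
      using finF prism_cont[OF F] img by (intro exI[of _ "F \<union> rr a b ` F"]) auto
  next
    fix x assume "x \<in> realization_carrier K2"
    then show "prism (fst (0::real, x)) (snd (0::real, x)) = id x" using prism0 by simp
  next
    fix x assume "x \<in> realization_carrier K2"
    then show "prism (fst (1::real, x)) (snd (1::real, x)) = rpush x" using prism1 by simp
  qed
  have h2b: "homotopic_with (\<lambda>_. True) (geometric_realization K2) (geometric_realization K2) rpush (phi \<circ> psi)"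
  proof (rule GR_hom[OF dclosed_oc, where h = "\<lambda>z. (\<lambda>p. (1 - fst z) * rpush (snd z) p + fst z * phi (psi (snd z)) p)"])
    fix F assume F: "F \<in> K2"
    have finF: "finite F" using F by (simp add: order_complex_def)
    let ?D = "{0..1::real} \<times> closed_simplex K2 F"
    have eqS: "closed_simplex K2 F = {g \<in> realization_carrier K2. supp g \<subseteq> F}" by (rule closed_simplex_eq)
    have cont: "continuous_on ?D (\<lambda>z. (\<lambda>p. (1 - fst z) * rpush (snd z) p + fst z * phi (psi (snd z)) p))"
    proof (rule continuous_on_coordinatewise_then_product)
      fix p
      have cps: "continuous_on ?D (\<lambda>z. psi (snd z))"
        by (rule continuous_on_compose2[OF psi_cont[OF finF] continuous_on_snd[OF continuous_on_id]])
           (auto simp: eqS)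
      have c1: "continuous_on ?D (\<lambda>z. phi (psi (snd z)))"
        by (rule continuous_on_compose2[OF phi_cont cps]) (auto simp: eqS intro: psi_carrier)
      have c0: "continuous_on ?D (\<lambda>z. sum (snd z) {c \<in> F. rr a b c = p})"
        by (intro continuous_on_sum cont_snd_coord)
      have c2: "continuous_on ?D (\<lambda>z. rpush (snd z) p)"
      proof (rule continuous_on_eq[OF c0])
        fix z assume "z \<in> ?D"
        then have sz: "supp (snd z) \<subseteq> F" by (auto simp: eqS)
        show "sum (snd z) {c \<in> F. rr a b c = p} = rpush (snd z) p"
          unfolding rpush_def
          by (rule sum.mono_neutral_right) (use finF sz in \<open>auto simp: supp_def\<close>)
      qed
      show "continuous_on ?D (\<lambda>z. (1 - fst z) * rpush (snd z) p + fst z * phi (psi (snd z)) p)"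
        by (intro continuous_on_add continuous_on_mult continuous_on_diff continuous_on_const
            continuous_on_fst[OF continuous_on_id] cont_coord2[OF c1] c2)
    qed
    have img: "\<forall>q\<in>?D. (\<lambda>z. (\<lambda>p. (1 - fst z) * rpush (snd z) p + fst z * phi (psi (snd z)) p)) q \<in> realization_carrier K2
              \<and> supp ((\<lambda>z. (\<lambda>p. (1 - fst z) * rpush (snd z) p + fst z * phi (psi (snd z)) p)) q) \<subseteq> rr a b ` F"
    proof
      fix q assume q: "q \<in> ?D"
      obtain t g where tg: "q = (t,g)" "t \<in> {0..1}" "g \<in> closed_simplex K2 F" using q by auto
      have gc: "g \<in> realization_carrier K2" "supp g \<subseteq> F" using tg(3) by (auto simp: eqS)
      have finR: "finite (rr a b ` supp g)" using K2_supp(1)[OF gc(1)] by simp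
      have sub: "\<And>G. G \<subseteq> rr a b ` supp g \<Longrightarrow> G \<noteq> {} \<Longrightarrow> G \<in> K2" using rr_chain[OF gc(1)] by blast
      have u: "rpush g \<in> realization_carrier K2" "supp (rpush g) \<subseteq> rr a b ` supp g"
        using rpush_carrier[OF gc(1)] by auto
      have w: "phi (psi g) \<in> realization_carrier K2" "supp (phi (psi g)) \<subseteq> rr a b ` supp g"
        using phi_carrier[OF psi_carrier[OF gc(1)]] phipsi_supp[OF gc(1)] by auto
      have "(\<lambda>p. (1-t) * rpush g p + t * phi (psi g) p) \<in> realization_carrier K2 \<and>
            supp (\<lambda>p. (1-t) * rpush g p + t * phi (psi g) p) \<subseteq> rr a b ` supp g"
        by (rule comb_carrier[OF finR sub u w tg(2)])
      moreover have "rr a b ` supp g \<subseteq> rr a b ` F" using gc(2) by blast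
      ultimately show "(\<lambda>z. (\<lambda>p. (1 - fst z) * rpush (snd z) p + fst z * phi (psi (snd z)) p)) q \<in> realization_carrier K2
              \<and> supp ((\<lambda>z. (\<lambda>p. (1 - fst z) * rpush (snd z) p + fst z * phi (psi (snd z)) p)) q) \<subseteq> rr a b ` F"
        using tg by auto
    qed
    show "\<exists>H. finite H \<and> continuous_on ?D (\<lambda>z. (\<lambda>p. (1 - fst z) * rpush (snd z) p + fst z * phi (psi (snd z)) p)) \<and>
       (\<forall>q\<in>?D. (\<lambda>z. (\<lambda>p. (1 - fst z) * rpush (snd z) p + fst z * phi (psi (snd z)) p)) q \<in> realization_carrier K2
              \<and> supp ((\<lambda>z. (\<lambda>p. (1 - fst z) * rpush (snd z) p + fst z * phi (psi (snd z)) p)) q) \<subseteq> H)"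
      using finF cont img by (intro exI[of _ "rr a b ` F"]) auto
  qed (simp_all add: fun_eq_iff)
  have h2: "homotopic_with (\<lambda>_. True) (geometric_realization K2) (geometric_realization K2) (phi \<circ> psi) id"
    using homotopic_with_trans[OF h2a h2b] homotopic_with_sym by blast
  show ?thesis unfolding homotopy_equivalent_space_def using c_phi c_psi h1 h2 by blast
qed

end

theorem mainTheorem18:
  fixes J :: "('n::finite \<Rightarrow> nat) set" and a b :: "'n \<Rightarrow> nat"
  assumes "order_ideal J" and "a \<le> b"
  shows "geometric_realization (Delta_complex a b J)
           homotopy_equivalent_space
         geometric_realization
           (order_complex (J \<inter> (\<lambda>c. a + c) ` (UNIV - {0..b - a})))"
proof -
  interpret nset a b J using assms by unfold_locales
  show ?thesis using main_nset by (simp add: PP_def)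
qed


end
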